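(* Consider Algorithm FoBa-gdt with parameter $\epsilon$. Let $s$ be a positive integer such that $$(s-\bar k)>(\bar k+1)\left[\left(\sqrt{\frac{\rho_+(s)}{\rho_-(s)}}+1\right)\frac{2\rho_+(1)}{\rho_-(s)}\right]^2,$$ and take $\epsilon>\frac{2\sqrt2\,\rho_+(1)}{\rho_-(s)}\|\nabla Q(\bar\beta)\|_\infty$. Then the algorithm terminates at some $k\le s-\bar k$.
   Context: Let $Q:\mathbb{R}^d\to\mathbb{R}$ be convex and continuously differentiable. $e_j$ is the $j$-th standard basis vector, $\mathrm{supp}(\beta)=\{j:\beta_j\ne0\}$, $\|\beta\|_0=|\mathrm{supp}(\beta)|$, $\|\cdot\|$ is the Euclidean norm, $A-B$ is set difference, and $v_S$ is $v$ restricted to the coordinates in $S$. For $F\subseteq\{1,\dots,d\}$, $\hat\beta(F)$ denotes a minimizer of $Q$ over $\{\beta:\mathrm{supp}(\beta)\subseteq F\}$ (assumed to exist). For a positive integer $s$, the restricted strong convexity constants $\rho_-(s),\rho_+(s)>0$ are constants such that for all $\beta,\beta'\in\mathbb{R}^d$ with $\|\beta'-\beta\|_0\le s$: $\frac{\rho_-(s)}{2}\|\beta'-\beta\|^2\le Q(\beta')-Q(\beta)-\langle\nabla Q(\beta),\beta'-\beta\rangle\le\frac{\rho_+(s)}{2}\|\beta'-\beta\|^2.$ $\bar\beta$ is a solution of $\min_\beta Q(\beta)$ subject to $\|\beta\|_0\le\bar k$, $\bar F=\mathrm{supp}(\bar\beta)$ and $\bar k=|\bar F|$. Algorithm FoBa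 has two variants: FoBa-obj (parameter $\delta>0$) and FoBa-gdt (parameter $\epsilon>0$). Initialize $F^{(0)}=\emptyset$, $\beta^{(0)}=0$, $k=0$, and repeat the following iteration. (1) Stopping test: FoBa-obj stops if $Q(\beta^{(k)})-\min_{\alpha\in\mathbb{R},\,j\notin F^{(k)}}Q(\beta^{(k)}+\alpha e_j)<\delta$; FoBa-gdt stops if $\|\nabla Q(\beta^{(k)})\|_\infty<\epsilon$. On stopping the output is $\beta^{(k)}$ with support $F^{(k)}$, and the algorithm is said to terminate at $k$. (2) Forward step: FoBa-obj picks $i^{(k)}\in\arg\min_{i\notin F^{(k)}}\min_\alpha Q(\beta^{(k)}+\alpha e_i)$; FoBa-gdt picks $i^{(k)}\in\arg\max_{i\notin F^{(k)}}|\nabla Q(\beta^{(k)})_i|$. Set $F^{(k+1)}=F^{(k)}\cup\{i^{(k)}\}$, $\beta^{(k+1)}=\hat\beta(F^{(k+1)})$, $\delta^{(k+1)}=Q(\beta^{(k)})-Q(\beta^{(k+1)})$, $k\leftarrow k+1$. (3) Backward step: repeat — if $F^{(k)}=\emptyset$ or $\min_{i\in F^{(k)}}Q(\beta^{(k)}-\beta^{(k)}_ie_i)-Q(\beta^{(k)})\ge\delta^{(k)}/2$, leave the backward step; otherwise pick $j\in\arg\min_{i\in F^{(k)}}Q(\beta^{(k)}-\beta^{(k)}_ie_i)$, set $F^{(k-1)}=F^{(k)}-\{j\}$, $\beta^{(k-1)}=\hat\beta(F^{(k-1)})$, $k\leftarrow k-1$ (where $\delta^{(k-1)}$ is the value recorded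 at the most recent forward step producing index $k-1$). Thus $|F^{(k)}|=k$ always. "At the beginning of an iteration" means the state just before a stopping test. *)

theory Defs
  imports "HOL-Analysis.Analysis"
begin

definition supp :: "real^'n \<Rightarrow> 'n set" where
  "supp \<beta> = {j. \<beta> $ j \<noteq> 0}"

definition norm0 :: "real^'n \<Rightarrow> nat" where
  "norm0 \<beta> = card (supp \<beta>)"

definition linf :: "real^'n \<Rightarrow> real" where
  "linf v = Max (range (\<lambda>j. \<bar>v $ j\<bar>))"

text \<open>beta is a minimizer of Q over vectors supported in F (a possible value of hat-beta(F)).\<close>
definition is_restr_min :: "(real^'n \<Rightarrow> real) \<Rightarrow> 'n set \<Rightarrow> real^'n \<Rightarrow> bool" where
  "is_restr_min Q F \<beta> \<longleftrightarrow> supp \<beta> \<subseteq> F \<and> (\<forall>\<beta>'. supp \<beta>' \<subseteq> F \<longrightarrow> Q \<beta> \<le> Q \<beta>')"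

text \<open>Restricted strong convexity / smoothness constants at sparsity level s; G is the gradient of Q.\<close>
definition rsc :: "(real^'n \<Rightarrow> real) \<Rightarrow> (real^'n \<Rightarrow> real^'n) \<Rightarrow> (nat \<Rightarrow> real) \<Rightarrow> (nat \<Rightarrow> real) \<Rightarrow> nat \<Rightarrow> bool" where
  "rsc Q G \<rho>m \<rho>p s \<longleftrightarrow> \<rho>m s > 0 \<and> \<rho>p s > 0 \<and>
     (\<forall>\<beta> \<beta>'. norm0 (\<beta>' - \<beta>) \<le> s \<longrightarrow>
        \<rho>m s / 2 * (norm (\<beta>' - \<beta>))\<^sup>2 \<le> Q \<beta>' - Q \<beta> - G \<beta> \<bullet> (\<beta>' - \<beta>) \<and>
        Q \<beta>' - Q \<beta> - G \<beta> \<bullet> (\<beta>' - \<beta>) \<le> \<rho>p s / 2 * (norm (\<beta>' - \<beta>))\<^sup>2)"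

text \<open>The current index k is card F;
  delta i is the value delta^(i) recorded at the most recent forward step producing index i.
  Phase Test = at the beginning of an iteration (just before the stopping test);
  phase Back = inside the backward loop.\<close>
datatype phase = Test | Back

type_synonym 'n foba_conf = "phase \<times> 'n set \<times> (real^'n) \<times> (nat \<Rightarrow> real)"

inductive foba_gdt_step :: "(real^'n \<Rightarrow> real) \<Rightarrow> (real^'n \<Rightarrow> real^'n) \<Rightarrow> real
    \<Rightarrow> 'n foba_conf \<Rightarrow> 'n foba_conf \<Rightarrow> bool"
  for Q G \<epsilon> where
  forward:
    "\<lbrakk> \<not> linf (G \<beta>) < \<epsilon>; i \<notin> F; \<forall>i'. i' \<notin> F \<longrightarrow> \<bar>G \<beta> $ i'\<bar> \<le> \<bar>G \<beta> $ i\<bar>;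
       is_restr_min Q (insert i F) \<beta>' \<rbrakk>
     \<Longrightarrow> foba_gdt_step Q G \<epsilon> (Test, F, \<beta>, \<delta>)
           (Back, insert i F, \<beta>', \<delta>(card F + 1 := Q \<beta> - Q \<beta>'))"
| back_exit:
    "\<lbrakk> F = {} \<or> (\<forall>i\<in>F. Q (\<beta> - axis i (\<beta> $ i)) - Q \<beta> \<ge> \<delta> (card F) / 2) \<rbrakk>
     \<Longrightarrow> foba_gdt_step Q G \<epsilon> (Back, F, \<beta>, \<delta>) (Test, F, \<beta>, \<delta>)"
| back_remove:
    "\<lbrakk> F \<noteq> {}; j \<in> F; \<forall>i\<in>F. Q (\<beta> - axis j (\<beta> $ j)) \<le> Q (\<beta> - axis i (\<beta> $ i));
       Q (\<beta> - axis j (\<beta> $ j)) - Q \<beta> < \<delta> (card F) / 2;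
       is_restr_min Q (F - {j}) \<beta>' \<rbrakk>
     \<Longrightarrow> foba_gdt_step Q G \<epsilon> (Back, F, \<beta>, \<delta>) (Back, F - {j}, \<beta>', \<delta>)"

definition foba_init :: "('n::finite) foba_conf" where
  "foba_init = (Test, {}, 0, \<lambda>_. 0)"

fun foba_gdt_stopped :: "(real^'n \<Rightarrow> real^'n) \<Rightarrow> real \<Rightarrow> 'n foba_conf \<Rightarrow> bool" where
  "foba_gdt_stopped G \<epsilon> (ph, F, \<beta>, \<delta>) \<longleftrightarrow> ph = Test \<and> linf (G \<beta>) < \<epsilon>"

fun conf_support :: "'n foba_conf \<Rightarrow> 'n set" where
  "conf_support (ph, F, \<beta>, \<delta>) = F"

end

theory Submission imports Defs begin

lemma norm2_sum: "(norm (x::real^'n))\<^sup>2 = (\<Sum>j\<in>UNIV. (x$j)\<^sup>2)"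
  by (simp only: power2_norm_eq_inner inner_vec_def) (simp add: power2_eq_square)

lemma inner_sum: "(x::real^'n) \<bullet> y = (\<Sum>j\<in>UNIV. x$j * y$j)"
  by (simp add: inner_vec_def)

lemma norm0_le: "supp (x::real^'n::finite) \<subseteq> S \<Longrightarrow> norm0 x \<le> card S"
  unfolding norm0_def by (simp add: card_mono)

lemma supp_axis: "supp (axis i (c::real)) \<subseteq> {i}"
  by (auto simp: supp_def axis_def)

lemma norm0_axis: "norm0 (axis i (c::real) :: real^'n::finite) \<le> 1"
  using norm0_le[OF supp_axis] by simp

lemma norm_axis_sq: "(norm (axis i (c::real) :: real^'n))\<^sup>2 = c\<^sup>2"
  by (simp only: power2_norm_eq_inner inner_axis') (simp add: power2_eq_square)

lemma linf_ge: "\<bar>v $ j\<bar> \<le> linf (v::real^'n::finite)"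
  unfolding linf_def by (rule Max_ge) auto

lemma linf_le: "(\<And>j. \<bar>v $ j\<bar> \<le> c) \<Longrightarrow> linf (v::real^'n::finite) \<le> c"
  unfolding linf_def by (subst Max_le_iff) auto

lemma linf_nonneg: "0 \<le> linf (v::real^'n::finite)"
  using linf_ge[of v] abs_ge_zero order_trans by blast

lemma sum_if_const: "(\<Sum>j\<in>(UNIV::'n::finite set). if j \<in> A then c else 0) = real (card A) * c"
  by (simp add: sum.If_cases)

locale foba =
  fixes Q :: "real^'n::finite \<Rightarrow> real" and G :: "real^'n \<Rightarrow> real^'n"
    and \<rho>m \<rho>p :: "nat \<Rightarrow> real" and \<beta>bar :: "real^'n" and kbar s :: nat and \<epsilon> :: real
  assumes hat_exists: "\<forall>F. \<exists>\<beta>. is_restr_min Q F \<beta>"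
    and rsc_s: "rsc Q G \<rho>m \<rho>p s" and rsc_1: "rsc Q G \<rho>m \<rho>p 1"
    and betabar_opt: "\<forall>\<beta>. norm0 \<beta> \<le> kbar \<longrightarrow> Q \<beta>bar \<le> Q \<beta>"
    and kbar_def: "kbar = norm0 \<beta>bar"
    and s_cond: "real s - real kbar > (real kbar + 1) *
        ((sqrt (\<rho>p s / \<rho>m s) + 1) * (2 * \<rho>p 1 / \<rho>m s))\<^sup>2"
    and eps_cond: "\<epsilon> > 2 * sqrt 2 * \<rho>p 1 / \<rho>m s * linf (G \<beta>bar)"
begin

lemma pos: "\<rho>m s > 0" "\<rho>p s > 0" "\<rho>m 1 > 0" "\<rho>p 1 > 0"
  using rsc_s rsc_1 unfolding rsc_def by auto

lemma lo_s: "norm0 (\<beta>' - \<beta>) \<le> s \<Longrightarrow> \<rho>m s / 2 * (norm (\<beta>' - \<beta>))\<^sup>2 \<le> Q \<beta>' - Q \<beta> - G \<beta> \<bullet> (\<beta>' - \<beta>)"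
  using rsc_s unfolding rsc_def by blast
lemma up_s: "norm0 (\<beta>' - \<beta>) \<le> s \<Longrightarrow> Q \<beta>' - Q \<beta> - G \<beta> \<bullet> (\<beta>' - \<beta>) \<le> \<rho>p s / 2 * (norm (\<beta>' - \<beta>))\<^sup>2"
  using rsc_s unfolding rsc_def by blast
lemma lo_1: "norm0 (\<beta>' - \<beta>) \<le> 1 \<Longrightarrow> \<rho>m 1 / 2 * (norm (\<beta>' - \<beta>))\<^sup>2 \<le> Q \<beta>' - Q \<beta> - G \<beta> \<bullet> (\<beta>' - \<beta>)"
  using rsc_1 unfolding rsc_def by blast
lemma up_1: "norm0 (\<beta>' - \<beta>) \<le> 1 \<Longrightarrow> Q \<beta>' - Q \<beta> - G \<beta> \<bullet> (\<beta>' - \<beta>) \<le> \<rho>p 1 / 2 * (norm (\<beta>' - \<beta>))\<^sup>2"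
  using rsc_1 unfolding rsc_def by blast

lemma s_gt: "kbar < s"
proof -
  have "0 \<le> (real kbar + 1) * ((sqrt (\<rho>p s / \<rho>m s) + 1) * (2 * \<rho>p 1 / \<rho>m s))\<^sup>2"
    by simp
  thus ?thesis using s_cond by linarith
qed

lemma s_pos: "s \<ge> 1" using s_gt by simp

lemma axis_step_up: "Q (\<beta> + axis i t) \<le> Q \<beta> + G \<beta> $ i * t + \<rho>p 1 / 2 * t\<^sup>2"
proof -
  have "norm0 ((\<beta> + axis i t) - \<beta>) \<le> 1" using norm0_axis by simp
  from up_1[OF this] show ?thesis by (simp add: inner_axis norm_axis_sq)
qed

lemma axis_step_lo: "Q (\<beta> + axis i t) \<ge> Q \<beta> + G \<beta> $ i * t + \<rho>m s / 2 * t\<^sup>2"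
proof -
  have "norm0 ((\<beta> + axis i t) - \<beta>) \<le> s" using norm0_axis[of i t] s_pos by simp
  from lo_s[OF this] show ?thesis by (simp add: inner_axis norm_axis_sq)
qed

lemma rho_le: "\<rho>m s \<le> \<rho>p 1" "\<rho>m s \<le> \<rho>p s"
proof -
  obtain i :: 'n where True by simp
  have a: "norm0 ((0 + axis i (1::real)) - 0) \<le> 1" using norm0_axis by simp
  have b: "norm0 ((0 + axis i (1::real)) - 0) \<le> s" using a s_pos by simp
  show "\<rho>m s \<le> \<rho>p 1" using lo_s[OF b] up_1[OF a] by (simp add: inner_axis)
  show "\<rho>m s \<le> \<rho>p s" using lo_s[OF b] up_s[OF b] by (simp add: inner_axis)
qed

lemma coord_min_grad:
  assumes "\<forall>t. Q \<beta> \<le> Q (\<beta> + axis i t)"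
  shows "G \<beta> $ i = 0"
proof -
  define g where "g = G \<beta> $ i"
  define t where "t = - g / \<rho>p 1"
  have "Q \<beta> \<le> Q \<beta> + g * t + \<rho>p 1 / 2 * t\<^sup>2"
    using assms[rule_format, of t] axis_step_up[of \<beta> i t] unfolding g_def by linarith
  hence "0 \<le> g * t + \<rho>p 1 / 2 * t\<^sup>2" by simp
  also have "g * t + \<rho>p 1 / 2 * t\<^sup>2 = - g\<^sup>2 / (2 * \<rho>p 1)"
    unfolding t_def using pos(4) by (simp add: field_simps power2_eq_square)
  finally have "0 \<le> - g\<^sup>2 / (2 * \<rho>p 1)" .
  hence "g\<^sup>2 / (2 * \<rho>p 1) \<le> 0" by simp
  hence "g\<^sup>2 \<le> 0" using pos(4) by (simp add: divide_le_0_iff)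
  thus ?thesis unfolding g_def by simp
qed

lemma supp_add_axis: "supp (\<beta> + axis i t) \<subseteq> insert i (supp \<beta>)"
  by (auto simp: supp_def axis_def)

lemma restr_min_supp: "is_restr_min Q F \<beta> \<Longrightarrow> supp \<beta> \<subseteq> F"
  unfolding is_restr_min_def by simp

lemma restr_min_grad:
  assumes "is_restr_min Q F \<beta>" "i \<in> F" shows "G \<beta> $ i = 0"
proof (rule coord_min_grad, rule allI)
  fix t
  have "supp (\<beta> + axis i t) \<subseteq> F"
    using supp_add_axis[of \<beta> i t] restr_min_supp[OF assms(1)] assms(2) by blast
  thus "Q \<beta> \<le> Q (\<beta> + axis i t)" using assms(1) unfolding is_restr_min_def by blast
qed

lemma restr_min_zero: "is_restr_min Q F \<beta> \<Longrightarrow> j \<notin> F \<Longrightarrow> \<beta> $ j = 0"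
  using restr_min_supp unfolding supp_def by blast

lemma bar_grad:
  assumes "i \<in> supp \<beta>bar" shows "G \<beta>bar $ i = 0"
proof (rule coord_min_grad, rule allI)
  fix t
  have "supp (\<beta>bar + axis i t) \<subseteq> supp \<beta>bar"
    using supp_add_axis[of \<beta>bar i t] assms by blast
  hence "norm0 (\<beta>bar + axis i t) \<le> kbar" unfolding kbar_def using norm0_le by (simp add: norm0_def)
  thus "Q \<beta>bar \<le> Q (\<beta>bar + axis i t)" using betabar_opt by blast
qed

lemma eps_pos: "\<epsilon> > 0"
proof -
  have "0 \<le> 2 * sqrt 2 * \<rho>p 1 / \<rho>m s * linf (G \<beta>bar)"
    using pos linf_nonneg[of "G \<beta>bar"] by (simp add: zero_le_divide_iff zero_le_mult_iff)
  thus ?thesis using eps_cond by linarith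
qed


lemma final_arith:
  assumes "real m * (\<rho>m s)^3 \<le> 2 * real kbar * (\<rho>p 1)\<^sup>2 * (\<rho>p s - \<rho>m s)"
  shows "real m + 2 * real kbar < real s"
proof -
  define r where "r = \<rho>p 1 / \<rho>m s"
  define k where "k = \<rho>p s / \<rho>m s"
  have rm: "\<rho>m s > 0" using pos by simp
  have r1: "r \<ge> 1" unfolding r_def using rho_le pos by simp
  have k1: "k \<ge> 1" unfolding k_def using rho_le pos by simp
  have "2 * real kbar * (\<rho>p 1)\<^sup>2 * (\<rho>p s - \<rho>m s) = (\<rho>m s)^3 * (2 * real kbar * r\<^sup>2 * (k - 1))"
    unfolding r_def k_def using rm by (simp add: field_simps power2_eq_square power3_eq_cube)
  hence "real m * (\<rho>m s)^3 \<le> (\<rho>m s)^3 * (2 * real kbar * r\<^sup>2 * (k - 1))" using assms by linarith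
  hence m: "real m \<le> 2 * real kbar * r\<^sup>2 * (k - 1)" using rm by (simp add: mult.commute)
  have sq: "(sqrt k + 1)\<^sup>2 \<ge> k + 1"
  proof -
    have "(sqrt k + 1)\<^sup>2 = k + 2 * sqrt k + 1" using k1 by (simp add: power2_eq_square algebra_simps)
    thus ?thesis using k1 by simp
  qed
  have "((sqrt k + 1) * (2 * r))\<^sup>2 = (sqrt k + 1)\<^sup>2 * (4 * r\<^sup>2)" by (simp add: power_mult_distrib)
  also have "\<dots> \<ge> (k + 1) * (4 * r\<^sup>2)" using sq by (intro mult_right_mono) auto
  finally have A: "((sqrt k + 1) * (2 * r))\<^sup>2 \<ge> (k + 1) * (4 * r\<^sup>2)" .
  have "(real kbar + 1) * ((sqrt k + 1) * (2 * r))\<^sup>2 \<ge> (real kbar + 1) * ((k + 1) * (4 * r\<^sup>2))"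
    using A by (intro mult_left_mono) auto
  moreover have "(real kbar + 1) * ((k + 1) * (4 * r\<^sup>2)) \<ge> 2 * real kbar * r\<^sup>2 * (k - 1) + real kbar"
  proof -
    have r2: "r\<^sup>2 \<ge> 1" using r1 by (simp add: one_le_power)
    have "(real kbar + 1) * ((k + 1) * (4 * r\<^sup>2)) - (2 * real kbar * r\<^sup>2 * (k - 1) + real kbar)
        = real kbar * (r\<^sup>2 * (2 * k + 6) - 1) + 4 * (k + 1) * r\<^sup>2"
      by (simp add: algebra_simps)
    moreover have "r\<^sup>2 * (2 * k + 6) - 1 \<ge> 0"
    proof -
      have "r\<^sup>2 * (2 * k + 6) \<ge> 1 * 6" using r2 k1 by (intro mult_mono) auto
      thus ?thesis by simp
    qed
    hence "real kbar * (r\<^sup>2 * (2 * k + 6) - 1) \<ge> 0" by simp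
    moreover have "4 * (k + 1) * r\<^sup>2 \<ge> 0" using k1 by simp
    ultimately show ?thesis by linarith
  qed
  ultimately have "(real kbar + 1) * ((sqrt k + 1) * (2 * r))\<^sup>2 \<ge> 2 * real kbar * r\<^sup>2 * (k - 1) + real kbar"
    by linarith
  moreover have "real s - real kbar > (real kbar + 1) * ((sqrt k + 1) * (2 * r))\<^sup>2"
    using s_cond unfolding r_def k_def by simp
  ultimately show ?thesis using m by linarith
qed

lemma axis_minus: "(\<beta>::real^'n) - axis i (b::real) = \<beta> + axis i (- b)"
  by (rule vec_eq_iff[THEN iffD2]) (auto simp: axis_def)

lemma gb_small:
  assumes "\<epsilon>\<^sup>2 / (2 * \<rho>p 1) \<le> \<delta>" "\<delta> \<le> \<rho>p 1 * b\<^sup>2"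
  shows "linf (G \<beta>bar) \<le> \<rho>m s / 2 * \<bar>b\<bar>"
proof -
  define Lg where "Lg = linf (G \<beta>bar)"
  define c where "c = 2 * sqrt 2 * \<rho>p 1 / \<rho>m s"
  have Lg0: "0 \<le> Lg" unfolding Lg_def by (rule linf_nonneg)
  have c0: "0 \<le> c" unfolding c_def using pos by simp
  have "c * Lg < \<epsilon>" unfolding c_def Lg_def by (rule eps_cond)
  moreover have cl0: "0 \<le> c * Lg" by (rule mult_nonneg_nonneg[OF c0 Lg0])
  ultimately have "(c * Lg)\<^sup>2 < \<epsilon>\<^sup>2" by (rule power_strict_mono) simp
  moreover have "(c * Lg)\<^sup>2 = 8 * (\<rho>p 1)\<^sup>2 / (\<rho>m s)\<^sup>2 * Lg\<^sup>2"
  proof -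
    have "c\<^sup>2 = (2 * sqrt 2)\<^sup>2 * (\<rho>p 1)\<^sup>2 / (\<rho>m s)\<^sup>2" unfolding c_def
      by (simp only: power_mult_distrib power_divide)
    also have "(2 * sqrt 2)\<^sup>2 = (8::real)" by (simp add: power_mult_distrib)
    finally have "c\<^sup>2 = 8 * (\<rho>p 1)\<^sup>2 / (\<rho>m s)\<^sup>2" by simp
    thus ?thesis by (simp add: power_mult_distrib)
  qed
  moreover have "\<epsilon>\<^sup>2 \<le> 2 * (\<rho>p 1)\<^sup>2 * b\<^sup>2"
  proof -
    have "\<epsilon>\<^sup>2 \<le> 2 * \<rho>p 1 * \<delta>" using assms(1) pos(4) by (simp add: pos_divide_le_eq mult.commute)
    also have "\<dots> \<le> 2 * \<rho>p 1 * (\<rho>p 1 * b\<^sup>2)" using assms(2) pos by simp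
    finally show ?thesis by (simp add: power2_eq_square)
  qed
  ultimately have lt: "8 * (\<rho>p 1)\<^sup>2 / (\<rho>m s)\<^sup>2 * Lg\<^sup>2 < 2 * (\<rho>p 1)\<^sup>2 * b\<^sup>2" by linarith
  define P where "P = (\<rho>p 1)\<^sup>2"
  define M where "M = (\<rho>m s)\<^sup>2"
  have P0: "P > 0" and M0: "M > 0" unfolding P_def M_def using pos by auto
  have "(8 * P / M * Lg\<^sup>2) * M < (2 * P * b\<^sup>2) * M"
    using lt M0 unfolding P_def M_def by (intro mult_strict_right_mono) auto
  moreover have "(8 * P / M * Lg\<^sup>2) * M = (2 * P) * (4 * Lg\<^sup>2)" using M0 by simp
  moreover have "(2 * P * b\<^sup>2) * M = (2 * P) * (M * b\<^sup>2)" by simp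
  ultimately have "(2 * P) * (4 * Lg\<^sup>2) < (2 * P) * (M * b\<^sup>2)" by simp
  hence "4 * Lg\<^sup>2 < M * b\<^sup>2" using P0 by (simp add: mult_less_cancel_left)
  moreover have "(\<rho>m s / 2 * \<bar>b\<bar>)\<^sup>2 = M * b\<^sup>2 / 4" unfolding M_def by (simp add: power_mult_distrib power_divide)
  ultimately have "Lg\<^sup>2 < (\<rho>m s / 2 * \<bar>b\<bar>)\<^sup>2" by simp
  moreover have nn: "0 \<le> \<rho>m s / 2 * \<bar>b\<bar>" using pos(1) by simp
  ultimately have "Lg < \<rho>m s / 2 * \<bar>b\<bar>" by (rule power2_less_imp_less)
  thus ?thesis unfolding Lg_def by (rule less_imp_le)
qed


lemma card_supp_bar: "card (supp \<beta>bar) = kbar" using kbar_def by (simp add: norm0_def)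

lemma test_bound:
  assumes rmin: "is_restr_min Q F \<beta>"
    and cF: "card F + kbar \<le> s"
    and dlo: "\<epsilon>\<^sup>2 / (2 * \<rho>p 1) \<le> \<delta>"
    and hback: "\<forall>i\<in>F. \<delta> / 2 \<le> Q (\<beta> - axis i (\<beta> $ i)) - Q \<beta>"
    and gapb: "Q \<beta> + \<delta> \<le> Q \<beta>bar + real kbar * \<rho>p 1 / \<rho>m s * \<delta>"
  shows "card F + kbar < s"
proof -
  define Fb where "Fb = supp \<beta>bar"
  define g where "g = G \<beta>"
  define gb where "gb = G \<beta>bar"
  have dpos: "\<delta> > 0"
  proof -
    have "\<epsilon>\<^sup>2 / (2 * \<rho>p 1) > 0" using eps_pos pos by simp
    thus ?thesis using dlo by linarith
  qed
  have g0: "\<And>j. j \<in> F \<Longrightarrow> g $ j = 0" unfolding g_def using restr_min_grad[OF rmin] by blast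
  have gb0: "\<And>j. j \<in> Fb \<Longrightarrow> gb $ j = 0" unfolding gb_def Fb_def using bar_grad by blast
  have b0: "\<And>j. j \<notin> F \<Longrightarrow> \<beta> $ j = 0" using restr_min_zero[OF rmin] by blast
  have bb0: "\<And>j. j \<notin> Fb \<Longrightarrow> \<beta>bar $ j = 0" unfolding Fb_def supp_def by blast
  have cFb: "card Fb = kbar" unfolding Fb_def by (rule card_supp_bar)
  have bi: "\<And>i. i \<in> F \<Longrightarrow> \<delta> \<le> \<rho>p 1 * (\<beta> $ i)\<^sup>2"
  proof -
    fix i assume i: "i \<in> F"
    have "Q (\<beta> + axis i (- (\<beta> $ i))) \<le> Q \<beta> + G \<beta> $ i * (- (\<beta> $ i)) + \<rho>p 1 / 2 * (- (\<beta> $ i))\<^sup>2"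
      by (rule axis_step_up)
    hence "Q (\<beta> - axis i (\<beta> $ i)) - Q \<beta> \<le> \<rho>p 1 / 2 * (\<beta> $ i)\<^sup>2"
      using g0[OF i] by (simp add: axis_minus g_def)
    moreover have "\<delta> / 2 \<le> Q (\<beta> - axis i (\<beta> $ i)) - Q \<beta>" using hback i by blast
    ultimately show "\<delta> \<le> \<rho>p 1 * (\<beta> $ i)\<^sup>2" by linarith
  qed
  define x2 where "x2 = (\<Sum>j\<in>UNIV. if j \<in> F - Fb then (\<beta> $ j)\<^sup>2 else 0)"
  define w2 where "w2 = (\<Sum>j\<in>UNIV. if j \<in> Fb - F then (\<beta>bar $ j)\<^sup>2 else 0)"
  have nA: "norm0 (\<beta> - \<beta>bar) \<le> s"
  proof -
    have "supp (\<beta> - \<beta>bar) \<subseteq> F \<union> Fb"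
    proof
      fix x assume "x \<in> supp (\<beta> - \<beta>bar)"
      hence "\<beta> $ x \<noteq> \<beta>bar $ x" by (simp add: supp_def)
      thus "x \<in> F \<union> Fb" using b0 bb0 by (metis UnI1 UnI2)
    qed
    hence "norm0 (\<beta> - \<beta>bar) \<le> card (F \<union> Fb)" by (rule norm0_le)
    also have "\<dots> \<le> card F + card Fb" by (rule card_Un_le)
    finally show ?thesis using cF cFb by simp
  qed
  have A1: "\<rho>m s / 2 * (norm (\<beta> - \<beta>bar))\<^sup>2 \<le> Q \<beta> - Q \<beta>bar - gb \<bullet> (\<beta> - \<beta>bar)"
    using lo_s[OF nA] unfolding gb_def .
  have A2: "(norm (\<beta> - \<beta>bar))\<^sup>2 \<ge> x2 + w2"
    unfolding norm2_sum x2_def w2_def sum.distrib[symmetric]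
    by (rule sum_mono) (auto simp: b0 bb0)
  have A3: "gb \<bullet> (\<beta> - \<beta>bar) \<ge> - (\<rho>m s / 2 * x2)"
  proof -
    have "gb \<bullet> (\<beta> - \<beta>bar) = (\<Sum>j\<in>UNIV. gb $ j * (\<beta> $ j - \<beta>bar $ j))" by (simp add: inner_sum)
    moreover have "- (\<rho>m s / 2 * x2) = (\<Sum>j\<in>UNIV. - (\<rho>m s / 2) * (if j \<in> F - Fb then (\<beta> $ j)\<^sup>2 else 0))"
      unfolding x2_def by (simp add: sum_distrib_left sum_negf)
    moreover have "(\<Sum>j\<in>UNIV. - (\<rho>m s / 2) * (if j \<in> F - Fb then (\<beta> $ j)\<^sup>2 else 0))
        \<le> (\<Sum>j\<in>UNIV. gb $ j * (\<beta> $ j - \<beta>bar $ j))"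
    proof (rule sum_mono)
      fix j :: 'n
      show "- (\<rho>m s / 2) * (if j \<in> F - Fb then (\<beta> $ j)\<^sup>2 else 0) \<le> gb $ j * (\<beta> $ j - \<beta>bar $ j)"
      proof (cases "j \<in> F - Fb")
        case True
        hence jF: "j \<in> F" and jb: "j \<notin> Fb" by auto
        have L: "\<bar>gb $ j\<bar> \<le> \<rho>m s / 2 * \<bar>\<beta> $ j\<bar>"
          using linf_ge[of gb j] gb_small[OF dlo bi[OF jF]] unfolding gb_def by linarith
        have "- (gb $ j * \<beta> $ j) \<le> \<bar>gb $ j\<bar> * \<bar>\<beta> $ j\<bar>"
          by (metis abs_ge_minus_self abs_mult)
        also have "\<dots> \<le> \<rho>m s / 2 * \<bar>\<beta> $ j\<bar> * \<bar>\<beta> $ j\<bar>" using L by (intro mult_right_mono) auto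
        also have "\<dots> = \<rho>m s / 2 * (\<beta> $ j)\<^sup>2" by (simp add: power2_eq_square abs_mult_self_eq)
        finally show ?thesis using True bb0[OF jb] by simp
      next
        case False
        thus ?thesis using gb0 b0 bb0 pos by (cases "j \<in> F"; cases "j \<in> Fb") auto
      qed
    qed
    ultimately show ?thesis by simp
  qed
  have h1: "\<rho>m s / 2 * w2 \<le> Q \<beta> - Q \<beta>bar"
  proof -
    have "\<rho>m s / 2 * (x2 + w2) \<le> \<rho>m s / 2 * (norm (\<beta> - \<beta>bar))\<^sup>2"
      using A2 pos by (intro mult_left_mono) auto
    thus ?thesis using A1 A3 by (simp add: algebra_simps)
  qed
  define z where "z = (\<chi> j. if j \<in> F then \<beta>bar $ j else 0)"
  have nB1: "norm0 (z - \<beta>) \<le> s"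
  proof -
    have "supp (z - \<beta>) \<subseteq> F" using b0 by (auto simp: supp_def z_def)
    hence "norm0 (z - \<beta>) \<le> card F" by (rule norm0_le)
    thus ?thesis using cF by simp
  qed
  have nB2: "norm0 (z - \<beta>bar) \<le> s"
  proof -
    have "supp (z - \<beta>bar) \<subseteq> Fb" using bb0 by (auto simp: supp_def z_def)
    hence "norm0 (z - \<beta>bar) \<le> card Fb" by (rule norm0_le)
    thus ?thesis using cF cFb by simp
  qed
  have B1: "\<rho>m s / 2 * (norm (z - \<beta>))\<^sup>2 \<le> Q z - Q \<beta> - g \<bullet> (z - \<beta>)"
    using lo_s[OF nB1] unfolding g_def .
  have B2: "Q z - Q \<beta>bar - gb \<bullet> (z - \<beta>bar) \<le> \<rho>p s / 2 * (norm (z - \<beta>bar))\<^sup>2"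
    using up_s[OF nB2] unfolding gb_def .
  have B3: "g \<bullet> (z - \<beta>) = 0"
    unfolding inner_sum by (rule sum.neutral) (auto simp: z_def g0 b0)
  have B4: "gb \<bullet> (z - \<beta>bar) = 0"
    unfolding inner_sum
  proof (rule sum.neutral, rule ballI)
    fix j :: 'n
    show "gb $ j * (z - \<beta>bar) $ j = 0"
      using gb0[of j] bb0[of j] by (cases "j \<in> Fb"; cases "j \<in> F") (auto simp: z_def)
  qed
  have B5: "(norm (z - \<beta>))\<^sup>2 \<ge> x2"
    unfolding norm2_sum x2_def by (rule sum_mono) (auto simp: z_def bb0)
  have B6: "(norm (z - \<beta>bar))\<^sup>2 = w2"
    unfolding norm2_sum w2_def by (rule sum.cong) (auto simp: z_def bb0)
  have h2: "\<rho>m s / 2 * x2 \<le> \<rho>p s / 2 * w2 - (Q \<beta> - Q \<beta>bar)"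
  proof -
    have "\<rho>m s / 2 * x2 \<le> \<rho>m s / 2 * (norm (z - \<beta>))\<^sup>2" using B5 pos by (intro mult_left_mono) auto
    moreover have "\<rho>p s / 2 * (norm (z - \<beta>bar))\<^sup>2 = \<rho>p s / 2 * w2" using B6 by simp
    ultimately show ?thesis using B1 B2 B3 B4 by linarith
  qed
  define m where "m = card (F - Fb)"
  have h4: "real m * (\<delta> / \<rho>p 1) \<le> x2"
  proof -
    have "real m * (\<delta> / \<rho>p 1) = (\<Sum>j\<in>UNIV. if j \<in> F - Fb then \<delta> / \<rho>p 1 else 0)"
      unfolding m_def by (rule sum_if_const[symmetric])
    also have "\<dots> \<le> x2" unfolding x2_def
    proof (rule sum_mono)
      fix j :: 'n
      show "(if j \<in> F - Fb then \<delta> / \<rho>p 1 else 0) \<le> (if j \<in> F - Fb then (\<beta> $ j)\<^sup>2 else 0)"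
      proof (cases "j \<in> F - Fb")
        case True
        hence "\<delta> \<le> \<rho>p 1 * (\<beta> $ j)\<^sup>2" using bi by blast
        hence "\<delta> / \<rho>p 1 \<le> (\<beta> $ j)\<^sup>2" using pos(4) by (simp add: pos_divide_le_eq mult.commute)
        thus ?thesis using True by simp
      next
        case False thus ?thesis by auto
      qed
    qed
    finally show ?thesis .
  qed
  have h3: "Q \<beta> - Q \<beta>bar \<le> real kbar * \<rho>p 1 / \<rho>m s * \<delta>" using gapb dpos by linarith
  have rm: "\<rho>m s > 0" "\<rho>p 1 > 0" using pos by auto
  have e1: "\<rho>m s * x2 \<le> (\<rho>p s - \<rho>m s) * w2" using h1 h2 by (simp add: algebra_simps)
  have e2: "(\<rho>m s)\<^sup>2 * w2 \<le> 2 * real kbar * \<rho>p 1 * \<delta>"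
  proof -
    have "\<rho>m s * w2 \<le> 2 * (real kbar * \<rho>p 1 / \<rho>m s * \<delta>)" using h1 h3 by linarith
    hence "\<rho>m s * (\<rho>m s * w2) \<le> \<rho>m s * (2 * (real kbar * \<rho>p 1 / \<rho>m s * \<delta>))"
      using rm by (intro mult_left_mono) auto
    thus ?thesis using rm by (simp add: power2_eq_square field_simps)
  qed
  have w0: "w2 \<ge> 0" unfolding w2_def by (rule sum_nonneg) auto
  have kk: "\<rho>p s - \<rho>m s \<ge> 0" using rho_le by simp
  have e3: "(\<rho>m s)^3 * x2 \<le> (\<rho>p s - \<rho>m s) * (2 * real kbar * \<rho>p 1 * \<delta>)"
  proof -
    have "(\<rho>m s)^3 * x2 = (\<rho>m s)\<^sup>2 * (\<rho>m s * x2)" by (simp add: power2_eq_square power3_eq_cube)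
    also have "\<dots> \<le> (\<rho>m s)\<^sup>2 * ((\<rho>p s - \<rho>m s) * w2)" using e1 by (intro mult_left_mono) auto
    also have "\<dots> = (\<rho>p s - \<rho>m s) * ((\<rho>m s)\<^sup>2 * w2)" by simp
    also have "\<dots> \<le> (\<rho>p s - \<rho>m s) * (2 * real kbar * \<rho>p 1 * \<delta>)" using e2 kk by (intro mult_left_mono) auto
    finally show ?thesis .
  qed
  have e4: "(\<rho>m s)^3 * (real m * (\<delta> / \<rho>p 1)) \<le> (\<rho>m s)^3 * x2"
    using h4 rm by (intro mult_left_mono) auto
  have e5: "(real m * (\<rho>m s)^3) * \<delta> \<le> (2 * real kbar * (\<rho>p 1)\<^sup>2 * (\<rho>p s - \<rho>m s)) * \<delta>"
  proof -
    have "(\<rho>m s)^3 * (real m * (\<delta> / \<rho>p 1)) \<le> (\<rho>p s - \<rho>m s) * (2 * real kbar * \<rho>p 1 * \<delta>)"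
      using e3 e4 by linarith
    hence "\<rho>p 1 * ((\<rho>m s)^3 * (real m * (\<delta> / \<rho>p 1))) \<le> \<rho>p 1 * ((\<rho>p s - \<rho>m s) * (2 * real kbar * \<rho>p 1 * \<delta>))"
      using rm by (intro mult_left_mono) auto
    thus ?thesis using rm by (simp add: field_simps power2_eq_square)
  qed
  hence "real m * (\<rho>m s)^3 \<le> 2 * real kbar * (\<rho>p 1)\<^sup>2 * (\<rho>p s - \<rho>m s)"
    using dpos by simp
  hence fin: "real m + 2 * real kbar < real s" by (rule final_arith)
  have "card F \<le> card ((F - Fb) \<union> Fb)" by (rule card_mono) auto
  also have "\<dots> \<le> m + kbar" unfolding m_def using card_Un_le cFb by metis
  moreover have "m + 2 * kbar < s"
  proof -
    have "real (m + 2 * kbar) < real s" using fin by simp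
    thus ?thesis by (simp only: of_nat_less_iff)
  qed
  ultimately show ?thesis by linarith
qed


lemma quad_bound: "a * c - r / 2 * c\<^sup>2 \<le> a\<^sup>2 / (2 * r)" if "r > 0" for a c r :: real
proof -
  have "0 \<le> (a - r * c)\<^sup>2" by simp
  hence "2 * r * (a * c - r / 2 * c\<^sup>2) \<le> a\<^sup>2" by (simp add: power2_eq_square algebra_simps)
  thus ?thesis using that by (simp add: pos_le_divide_eq mult.commute)
qed

lemma fwd_facts:
  assumes rmin: "is_restr_min Q F \<beta>"
    and cF: "card F + kbar \<le> s"
    and iF: "i \<notin> F"
    and imax: "\<forall>i'. i' \<notin> F \<longrightarrow> \<bar>G \<beta> $ i'\<bar> \<le> \<bar>G \<beta> $ i\<bar>"
    and nst: "\<not> linf (G \<beta>) < \<epsilon>"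
    and rmin': "is_restr_min Q (insert i F) \<beta>'"
  shows "\<epsilon>\<^sup>2 / (2 * \<rho>p 1) \<le> Q \<beta> - Q \<beta>'"
    and "Q \<beta> \<le> Q \<beta>bar + real kbar * \<rho>p 1 / \<rho>m s * (Q \<beta> - Q \<beta>')"
proof -
  define Fb where "Fb = supp \<beta>bar"
  define g where "g = G \<beta>"
  define gi where "gi = g $ i"
  have g0: "\<And>j. j \<in> F \<Longrightarrow> g $ j = 0" unfolding g_def using restr_min_grad[OF rmin] by blast
  have b0: "\<And>j. j \<notin> F \<Longrightarrow> \<beta> $ j = 0" using restr_min_zero[OF rmin] by blast
  have bb0: "\<And>j. j \<notin> Fb \<Longrightarrow> \<beta>bar $ j = 0" unfolding Fb_def supp_def by blast
  have cFb: "card Fb = kbar" unfolding Fb_def by (rule card_supp_bar)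
  have gle: "\<And>j. \<bar>g $ j\<bar> \<le> \<bar>gi\<bar>"
  proof -
    fix j show "\<bar>g $ j\<bar> \<le> \<bar>gi\<bar>"
      using imax g0[of j] unfolding gi_def g_def by (cases "j \<in> F") auto
  qed
  define t where "t = - gi / \<rho>p 1"
  have "supp (\<beta> + axis i t) \<subseteq> insert i F"
    using supp_add_axis[of \<beta> i t] restr_min_supp[OF rmin] by blast
  hence "Q \<beta>' \<le> Q (\<beta> + axis i t)" using rmin' unfolding is_restr_min_def by blast
  also have "\<dots> \<le> Q \<beta> + gi * t + \<rho>p 1 / 2 * t\<^sup>2" unfolding gi_def g_def by (rule axis_step_up)
  finally have st: "Q \<beta>' \<le> Q \<beta> + (gi * t + \<rho>p 1 / 2 * t\<^sup>2)" by simp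
  have "gi * t + \<rho>p 1 / 2 * t\<^sup>2 = - (gi\<^sup>2 / (2 * \<rho>p 1))"
    unfolding t_def using pos(4) by (simp add: field_simps power2_eq_square)
  with st have D: "gi\<^sup>2 / (2 * \<rho>p 1) \<le> Q \<beta> - Q \<beta>'" by linarith
  have "linf g \<le> \<bar>gi\<bar>" by (rule linf_le[OF gle])
  hence "\<epsilon> \<le> \<bar>gi\<bar>" using nst unfolding g_def by simp
  hence "\<epsilon>\<^sup>2 \<le> \<bar>gi\<bar>\<^sup>2" using eps_pos by (intro power_mono) auto
  hence "\<epsilon>\<^sup>2 \<le> gi\<^sup>2" by simp
  hence "\<epsilon>\<^sup>2 / (2 * \<rho>p 1) \<le> gi\<^sup>2 / (2 * \<rho>p 1)" using pos(4) by (intro divide_right_mono) auto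
  thus "\<epsilon>\<^sup>2 / (2 * \<rho>p 1) \<le> Q \<beta> - Q \<beta>'" using D by linarith
  have nA: "norm0 (\<beta>bar - \<beta>) \<le> s"
  proof -
    have "supp (\<beta>bar - \<beta>) \<subseteq> F \<union> Fb"
    proof
      fix x assume "x \<in> supp (\<beta>bar - \<beta>)"
      hence "\<beta> $ x \<noteq> \<beta>bar $ x" by (simp add: supp_def)
      thus "x \<in> F \<union> Fb" using b0 bb0 by (metis UnI1 UnI2)
    qed
    hence "norm0 (\<beta>bar - \<beta>) \<le> card (F \<union> Fb)" by (rule norm0_le)
    also have "\<dots> \<le> card F + card Fb" by (rule card_Un_le)
    finally show ?thesis using cF cFb by simp
  qed
  have A1: "\<rho>m s / 2 * (norm (\<beta>bar - \<beta>))\<^sup>2 \<le> Q \<beta>bar - Q \<beta> - g \<bullet> (\<beta>bar - \<beta>)"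
    using lo_s[OF nA] unfolding g_def .
  define w2 where "w2 = (\<Sum>j\<in>UNIV. if j \<in> Fb - F then (\<beta>bar $ j)\<^sup>2 else 0)"
  have A2: "(norm (\<beta>bar - \<beta>))\<^sup>2 \<ge> w2"
    unfolding norm2_sum w2_def by (rule sum_mono) (auto simp: b0)
  have A3: "- (g \<bullet> (\<beta>bar - \<beta>)) - \<rho>m s / 2 * w2 \<le> real (card (Fb - F)) * (gi\<^sup>2 / (2 * \<rho>m s))"
  proof -
    have "- (g \<bullet> (\<beta>bar - \<beta>)) - \<rho>m s / 2 * w2
        = (\<Sum>j\<in>UNIV. - (g $ j * (\<beta>bar $ j - \<beta> $ j)) - \<rho>m s / 2 * (if j \<in> Fb - F then (\<beta>bar $ j)\<^sup>2 else 0))"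
      unfolding inner_sum w2_def by (simp add: sum_subtractf sum_negf sum_distrib_left)
    also have "\<dots> \<le> (\<Sum>j\<in>UNIV. if j \<in> Fb - F then gi\<^sup>2 / (2 * \<rho>m s) else 0)"
    proof (rule sum_mono)
      fix j :: 'n
      show "- (g $ j * (\<beta>bar $ j - \<beta> $ j)) - \<rho>m s / 2 * (if j \<in> Fb - F then (\<beta>bar $ j)\<^sup>2 else 0)
          \<le> (if j \<in> Fb - F then gi\<^sup>2 / (2 * \<rho>m s) else 0)"
      proof (cases "j \<in> Fb - F")
        case True
        hence "\<beta> $ j = 0" using b0 by blast
        have "- (g $ j * \<beta>bar $ j) \<le> \<bar>g $ j\<bar> * \<bar>\<beta>bar $ j\<bar>" by (metis abs_ge_minus_self abs_mult)
        also have "\<dots> \<le> \<bar>gi\<bar> * \<bar>\<beta>bar $ j\<bar>" using gle by (intro mult_right_mono) auto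
        finally have "- (g $ j * \<beta>bar $ j) - \<rho>m s / 2 * (\<beta>bar $ j)\<^sup>2 \<le> \<bar>gi\<bar> * \<bar>\<beta>bar $ j\<bar> - \<rho>m s / 2 * \<bar>\<beta>bar $ j\<bar>\<^sup>2"
          by simp
        also have "\<dots> \<le> \<bar>gi\<bar>\<^sup>2 / (2 * \<rho>m s)" by (rule quad_bound) (use pos in simp)
        finally show ?thesis using True \<open>\<beta> $ j = 0\<close> by simp
      next
        case False
        thus ?thesis using g0[of j] b0[of j] bb0[of j] by (cases "j \<in> F"; cases "j \<in> Fb") auto
      qed
    qed
    also have "\<dots> = real (card (Fb - F)) * (gi\<^sup>2 / (2 * \<rho>m s))" by (rule sum_if_const)
    finally show ?thesis .
  qed
  have cle: "real (card (Fb - F)) \<le> real kbar"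
    using card_mono[of Fb "Fb - F"] cFb by auto
  have gap: "Q \<beta> - Q \<beta>bar \<le> real kbar * (gi\<^sup>2 / (2 * \<rho>m s))"
  proof -
    have "\<rho>m s / 2 * w2 \<le> \<rho>m s / 2 * (norm (\<beta>bar - \<beta>))\<^sup>2" using A2 pos by (intro mult_left_mono) auto
    hence "Q \<beta> - Q \<beta>bar \<le> real (card (Fb - F)) * (gi\<^sup>2 / (2 * \<rho>m s))" using A1 A3 by linarith
    also have "\<dots> \<le> real kbar * (gi\<^sup>2 / (2 * \<rho>m s))" using cle pos by (intro mult_right_mono) auto
    finally show ?thesis .
  qed
  have "gi\<^sup>2 / (2 * \<rho>m s) = \<rho>p 1 / \<rho>m s * (gi\<^sup>2 / (2 * \<rho>p 1))" using pos by (simp add: field_simps)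
  also have "\<dots> \<le> \<rho>p 1 / \<rho>m s * (Q \<beta> - Q \<beta>')" using D pos by (intro mult_left_mono) auto
  finally have "real kbar * (gi\<^sup>2 / (2 * \<rho>m s)) \<le> real kbar * (\<rho>p 1 / \<rho>m s * (Q \<beta> - Q \<beta>'))"
    by (intro mult_left_mono) auto
  with gap show "Q \<beta> \<le> Q \<beta>bar + real kbar * \<rho>p 1 / \<rho>m s * (Q \<beta> - Q \<beta>')" by simp
qed


definition "\<beta>min = (SOME \<beta>. is_restr_min Q UNIV \<beta>)"
definition "Qmin = Q \<beta>min"

lemma Qmin_le: "Qmin \<le> Q \<beta>"
proof -
  have "is_restr_min Q UNIV \<beta>min" unfolding \<beta>min_def using hat_exists someI_ex by metis
  thus ?thesis unfolding Qmin_def is_restr_min_def by blast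
qed

definition "\<eta> = \<epsilon>\<^sup>2 / (4 * \<rho>p 1)"
definition "Rr = Q 0 - Qmin + \<eta>"
definition "B = Rr / \<eta> + 1"

lemma eta_pos: "\<eta> > 0" unfolding \<eta>_def using eps_pos pos by simp
lemma eta2: "\<epsilon>\<^sup>2 / (2 * \<rho>p 1) = 2 * \<eta>" unfolding \<eta>_def by simp
lemma Rr_pos: "Rr \<ge> \<eta>" unfolding Rr_def using Qmin_le[of 0] by simp
lemma B_ge: "B \<ge> 1" unfolding B_def using Rr_pos eta_pos by simp
lemma etaB: "\<eta> * B = Rr + \<eta>" unfolding B_def using eta_pos by (simp add: field_simps)

definition Inv :: "phase \<Rightarrow> 'n set \<Rightarrow> real^'n \<Rightarrow> (nat \<Rightarrow> real) \<Rightarrow> (nat \<Rightarrow> real) \<Rightarrow> bool" where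
  "Inv ph F \<beta> \<delta> V \<longleftrightarrow> is_restr_min Q F \<beta> \<and> card F + kbar \<le> s \<and>
   (\<forall>j. 1 \<le> j \<and> j \<le> card F \<longrightarrow> 2 * \<eta> \<le> \<delta> j \<and> V j + \<delta> j \<le> Q \<beta>bar + real kbar * \<rho>p 1 / \<rho>m s * \<delta> j) \<and>
   (\<forall>j < card F. V (Suc j) + \<delta> (Suc j) \<le> V j) \<and>
   Q \<beta> \<le> V (card F) \<and>
   (\<forall>j \<le> card F. Qmin \<le> V j \<and> V j \<le> Q 0) \<and>
   (ph = Test \<longrightarrow> F = {} \<or> (\<forall>i\<in>F. \<delta> (card F) / 2 \<le> Q (\<beta> - axis i (\<beta> $ i)) - Q \<beta>))"

definition W :: "'n set \<Rightarrow> (nat \<Rightarrow> real) \<Rightarrow> nat \<Rightarrow> real" where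
  "W F V j = (if j \<le> card F then V j - Qmin else Rr)"

definition Phi :: "phase \<Rightarrow> 'n set \<Rightarrow> (nat \<Rightarrow> real) \<Rightarrow> real" where
  "Phi ph F V = (\<Sum>j\<le>s. W F V j * B ^ (s - j)) + (if ph = Back then \<eta> / 2 else 0)"

lemma Phi_nonneg:
  assumes "Inv ph F \<beta> \<delta> V" shows "Phi ph F V \<ge> 0"
proof -
  have "\<And>j. W F V j \<ge> 0" using assms Rr_pos eta_pos unfolding W_def Inv_def by auto
  hence "\<And>j. W F V j * B ^ (s - j) \<ge> 0" using B_ge by simp
  hence "(\<Sum>j\<le>s. W F V j * B ^ (s - j)) \<ge> 0" by (simp add: sum_nonneg)
  thus ?thesis unfolding Phi_def using eta_pos by simp
qed

lemma sum_change1: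
  fixes f f' :: "nat \<Rightarrow> real"
  assumes "finite A" "a \<in> A" "\<And>j. j \<in> A \<Longrightarrow> j \<noteq> a \<Longrightarrow> f' j = f j"
  shows "sum f' A = sum f A + (f' a - f a)"
proof -
  have "sum f' A = f' a + sum f' (A - {a})" using assms by (simp add: sum.remove)
  also have "sum f' (A - {a}) = sum f (A - {a})" using assms(3) by (intro sum.cong) auto
  also have "sum f A = f a + sum f (A - {a})" using assms by (simp add: sum.remove)
  ultimately show ?thesis by simp
qed

lemma Inv_test_bound:
  assumes "Inv Test F \<beta> \<delta> V" shows "card F + kbar < s"
proof (cases "F = {}")
  case True thus ?thesis using s_gt by simp
next
  case False
  hence c1: "1 \<le> card F" by (simp add: Suc_leI card_gt_0_iff)
  from assms have rmin: "is_restr_min Q F \<beta>" and cF: "card F + kbar \<le> s"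
    and dj: "2 * \<eta> \<le> \<delta> (card F)" and vj: "V (card F) + \<delta> (card F) \<le> Q \<beta>bar + real kbar * \<rho>p 1 / \<rho>m s * \<delta> (card F)"
    and qv: "Q \<beta> \<le> V (card F)"
    and bk: "\<forall>i\<in>F. \<delta> (card F) / 2 \<le> Q (\<beta> - axis i (\<beta> $ i)) - Q \<beta>"
    using c1 False unfolding Inv_def by auto
  show ?thesis
    by (rule test_bound[OF rmin cF _ bk]) (use dj vj qv eta2 in auto)
qed


lemma Bpow: "B ^ p \<ge> 1" using B_ge by (simp add: one_le_power)

lemma step_fwd:
  assumes inv: "Inv Test F \<beta> \<delta> V"
    and nst: "\<not> linf (G \<beta>) < \<epsilon>" and iF: "i \<notin> F"
    and imax: "\<forall>i'. i' \<notin> F \<longrightarrow> \<bar>G \<beta> $ i'\<bar> \<le> \<bar>G \<beta> $ i\<bar>"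
    and rmin': "is_restr_min Q (insert i F) \<beta>'"
  shows "\<exists>V'. Inv Back (insert i F) \<beta>' (\<delta>(card F + 1 := Q \<beta> - Q \<beta>')) V' \<and>
     Phi Back (insert i F) V' \<le> Phi Test F V - \<eta> / 2"
proof -
  define k where "k = card F"
  define D where "D = Q \<beta> - Q \<beta>'"
  define V' where "V' = V(Suc k := Q \<beta>')"
  define \<delta>' where "\<delta>' = \<delta>(Suc k := D)"
  have kb: "k + kbar < s" unfolding k_def by (rule Inv_test_bound[OF inv])
  from inv have rmin: "is_restr_min Q F \<beta>" and cF: "card F + kbar \<le> s"
    and I1: "\<forall>j. 1 \<le> j \<and> j \<le> k \<longrightarrow> 2 * \<eta> \<le> \<delta> j \<and> V j + \<delta> j \<le> Q \<beta>bar + real kbar * \<rho>p 1 / \<rho>m s * \<delta> j"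
    and I2: "\<forall>j < k. V (Suc j) + \<delta> (Suc j) \<le> V j"
    and I3: "Q \<beta> \<le> V k"
    and I4: "\<forall>j \<le> k. Qmin \<le> V j \<and> V j \<le> Q 0"
    unfolding Inv_def k_def by auto
  have fa: "2 * \<eta> \<le> D" using fwd_facts(1)[OF rmin cF iF imax nst rmin'] eta2 unfolding D_def by simp
  have fb: "Q \<beta> \<le> Q \<beta>bar + real kbar * \<rho>p 1 / \<rho>m s * D"
    using fwd_facts(2)[OF rmin cF iF imax nst rmin'] unfolding D_def by simp
  have ck: "card (insert i F) = Suc k" unfolding k_def using iF by simp
  have Vk: "V k \<le> Q 0" using I4 by simp
  have inv': "Inv Back (insert i F) \<beta>' \<delta>' V'"
    unfolding Inv_def ck
  proof (intro conjI allI impI)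
    show "is_restr_min Q (insert i F) \<beta>'" by (rule rmin')
    show "Suc k + kbar \<le> s" using kb by simp
    fix j assume j: "1 \<le> j \<and> j \<le> Suc k"
    show "2 * \<eta> \<le> \<delta>' j" using j I1 fa unfolding \<delta>'_def by (cases "j = Suc k") auto
    show "V' j + \<delta>' j \<le> Q \<beta>bar + real kbar * \<rho>p 1 / \<rho>m s * \<delta>' j"
      using j I1 fb unfolding \<delta>'_def V'_def D_def by (cases "j = Suc k") auto
  next
    fix j assume j: "j < Suc k"
    show "V' (Suc j) + \<delta>' (Suc j) \<le> V' j"
      using j I2 I3 unfolding \<delta>'_def V'_def D_def by (cases "j = k") auto
  next
    show "Q \<beta>' \<le> V' (Suc k)" unfolding V'_def by simp
  next
    fix j assume j: "j \<le> Suc k"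
    show "Qmin \<le> V' j" using j I4 Qmin_le unfolding V'_def by (cases "j = Suc k") auto
    show "V' j \<le> Q 0" using j I4 I3 fa eta_pos Vk unfolding V'_def D_def by (cases "j = Suc k") auto
  qed simp
  have sk: "Suc k \<in> {..s}" using kb by simp
  have "(\<Sum>j\<le>s. W (insert i F) V' j * B ^ (s - j)) =
        (\<Sum>j\<le>s. W F V j * B ^ (s - j)) + (W (insert i F) V' (Suc k) * B ^ (s - Suc k) - W F V (Suc k) * B ^ (s - Suc k))"
    by (rule sum_change1[OF _ sk]) (auto simp: W_def ck V'_def k_def)
  moreover have "W (insert i F) V' (Suc k) * B ^ (s - Suc k) - W F V (Suc k) * B ^ (s - Suc k) \<le> - (3 * \<eta>)"
  proof -
    have "W (insert i F) V' (Suc k) - W F V (Suc k) = Q \<beta>' - Qmin - Rr"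
      unfolding W_def ck V'_def k_def by simp
    also have "\<dots> \<le> - (3 * \<eta>)" unfolding Rr_def using fa I3 Vk unfolding D_def by simp
    finally have d: "W (insert i F) V' (Suc k) - W F V (Suc k) \<le> - (3 * \<eta>)" .
    have "(W (insert i F) V' (Suc k) - W F V (Suc k)) * B ^ (s - Suc k) \<le> - (3 * \<eta>) * B ^ (s - Suc k)"
      using d B_ge by (intro mult_right_mono) auto
    also have "\<dots> \<le> - (3 * \<eta>) * 1" using Bpow eta_pos by (intro mult_left_mono_neg) auto
    finally show ?thesis by (simp add: algebra_simps)
  qed
  ultimately have "Phi Back (insert i F) V' \<le> Phi Test F V - 3 * \<eta> + \<eta> / 2"
    unfolding Phi_def by simp
  hence "Phi Back (insert i F) V' \<le> Phi Test F V - \<eta> / 2" using eta_pos by simp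
  thus ?thesis using inv' unfolding \<delta>'_def D_def k_def by auto
qed


lemma supp_remove:
  assumes "supp \<beta> \<subseteq> F" shows "supp (\<beta> - axis j (\<beta> $ j)) \<subseteq> F - {j}"
proof
  fix x assume "x \<in> supp (\<beta> - axis j (\<beta> $ j))"
  hence h: "\<beta> $ x - axis j (\<beta> $ j) $ x \<noteq> 0" by (simp add: supp_def)
  have xj: "x \<noteq> j"
  proof
    assume "x = j" thus False using h by simp
  qed
  have "axis j (\<beta> $ j) $ x = 0" using xj by (simp add: axis_def)
  hence "\<beta> $ x \<noteq> 0" using h by simp
  hence "x \<in> F" using assms by (auto simp: supp_def)
  thus "x \<in> F - {j}" using xj by simp
qed

lemma step_remove:
  assumes inv: "Inv Back F \<beta> \<delta> V"
    and jF: "j \<in> F"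
    and cond: "Q (\<beta> - axis j (\<beta> $ j)) - Q \<beta> < \<delta> (card F) / 2"
    and rmin': "is_restr_min Q (F - {j}) \<beta>'"
  shows "\<exists>V'. Inv Back (F - {j}) \<beta>' \<delta> V' \<and> Phi Back (F - {j}) V' \<le> Phi Back F V - \<eta> / 2"
proof -
  define l where "l = card F"
  have "F \<noteq> {}" using jF by blast
  hence "card F > 0" by (simp add: card_gt_0_iff)
  hence l1: "l \<ge> 1" unfolding l_def by simp
  then obtain k where lk: "l = Suc k" by (cases l) auto
  have ck: "card (F - {j}) = k" using jF lk unfolding l_def by simp
  from inv have rmin: "is_restr_min Q F \<beta>" and cF: "l + kbar \<le> s"
    and I1: "\<forall>i. 1 \<le> i \<and> i \<le> l \<longrightarrow> 2 * \<eta> \<le> \<delta> i \<and> V i + \<delta> i \<le> Q \<beta>bar + real kbar * \<rho>p 1 / \<rho>m s * \<delta> i"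
    and I2: "\<forall>i < l. V (Suc i) + \<delta> (Suc i) \<le> V i"
    and I3: "Q \<beta> \<le> V l"
    and I4: "\<forall>i \<le> l. Qmin \<le> V i \<and> V i \<le> Q 0"
    unfolding Inv_def l_def by auto
  have "Q \<beta>' \<le> Q (\<beta> - axis j (\<beta> $ j))"
    using rmin' supp_remove[OF restr_min_supp[OF rmin]] unfolding is_restr_min_def by blast
  moreover have "2 * \<eta> \<le> \<delta> l" using I1 l1 by simp
  moreover have "V l + \<delta> l \<le> V k" using I2 lk by auto
  ultimately have hk: "Q \<beta>' \<le> V k - \<eta>" using cond I3 unfolding l_def by linarith
  define V' where "V' = V(k := Q \<beta>')"
  have vle: "\<And>i. V' i \<le> V i" unfolding V'_def using hk eta_pos by simp
  have veq: "\<And>i. i \<noteq> k \<Longrightarrow> V' i = V i" unfolding V'_def by simp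
  have inv': "Inv Back (F - {j}) \<beta>' \<delta> V'"
    unfolding Inv_def ck
  proof (intro conjI allI impI)
    show "is_restr_min Q (F - {j}) \<beta>'" by (rule rmin')
    show "k + kbar \<le> s" using cF lk by simp
    fix i assume i: "1 \<le> i \<and> i \<le> k"
    show "2 * \<eta> \<le> \<delta> i" using i I1 lk by auto
    show "V' i + \<delta> i \<le> Q \<beta>bar + real kbar * \<rho>p 1 / \<rho>m s * \<delta> i"
    proof -
      have "V i + \<delta> i \<le> Q \<beta>bar + real kbar * \<rho>p 1 / \<rho>m s * \<delta> i" using i I1 lk by simp
      thus ?thesis using vle[of i] by linarith
    qed
  next
    fix i assume i: "i < k"
    show "V' (Suc i) + \<delta> (Suc i) \<le> V' i"
    proof -
      have "V (Suc i) + \<delta> (Suc i) \<le> V i" using i I2 lk by simp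
      thus ?thesis using vle[of "Suc i"] veq[of i] i by simp
    qed
  next
    show "Q \<beta>' \<le> V' k" unfolding V'_def by simp
  next
    fix i assume i: "i \<le> k"
    show "Qmin \<le> V' i" using i I4 Qmin_le lk unfolding V'_def by (cases "i = k") auto
    have "V i \<le> Q 0" using i I4 lk by simp
    thus "V' i \<le> Q 0" using vle[of i] by linarith
  qed simp
  define f1 where "f1 i = W F V i * B ^ (s - i)" for i
  define f3 where "f3 i = W (F - {j}) V' i * B ^ (s - i)" for i
  have "sum f3 {..s} = sum f1 {..s} + (f3 k - f1 k) + (f3 (Suc k) - f1 (Suc k))"
  proof -
    define f2 where "f2 i = (if i = k then f3 i else f1 i)" for i
    have sk: "Suc k \<in> {..s}" "k \<in> {..s}" using cF lk by auto
    have "sum f2 {..s} = sum f1 {..s} + (f2 k - f1 k)"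
      by (rule sum_change1[OF _ sk(2)]) (auto simp: f2_def)
    moreover have "sum f3 {..s} = sum f2 {..s} + (f3 (Suc k) - f2 (Suc k))"
    proof (rule sum_change1[OF _ sk(1)])
      fix i assume "i \<in> {..s}" "i \<noteq> Suc k"
      thus "f3 i = f2 i" unfolding f2_def f3_def f1_def W_def V'_def using ck lk unfolding l_def
        by auto
    qed simp
    ultimately show ?thesis unfolding f2_def by simp
  qed
  moreover have "f3 (Suc k) - f1 (Suc k) \<le> Rr * B ^ (s - Suc k)"
  proof -
    have "f3 (Suc k) - f1 (Suc k) = (Rr - (V l - Qmin)) * B ^ (s - Suc k)"
      unfolding f3_def f1_def W_def using ck lk unfolding l_def by (simp add: algebra_simps)
    also have "\<dots> \<le> Rr * B ^ (s - Suc k)" using I4 B_ge by (intro mult_right_mono) auto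
    finally show ?thesis .
  qed
  moreover have "f3 k - f1 k \<le> - (Rr + \<eta>) * B ^ (s - Suc k)"
  proof -
    have "f3 k - f1 k = (Q \<beta>' - V k) * B ^ (s - k)"
      unfolding f3_def f1_def W_def V'_def using ck lk unfolding l_def by (simp add: algebra_simps)
    also have "\<dots> \<le> (- \<eta>) * B ^ (s - k)" using hk B_ge by (intro mult_right_mono) auto
    also have "B ^ (s - k) = B * B ^ (s - Suc k)" using cF lk by (simp add: Suc_diff_Suc[symmetric])
    also have "- \<eta> * (B * B ^ (s - Suc k)) = - (\<eta> * B) * B ^ (s - Suc k)" by (simp add: mult.assoc)
    also have "\<dots> = - (Rr + \<eta>) * B ^ (s - Suc k)" using etaB by simp
    finally show ?thesis .
  qed
  ultimately have "sum f3 {..s} \<le> sum f1 {..s} - \<eta> * B ^ (s - Suc k)"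
    by (simp add: algebra_simps)
  moreover have "\<eta> * B ^ (s - Suc k) \<ge> \<eta>" using Bpow eta_pos by simp
  ultimately have "sum f3 {..s} \<le> sum f1 {..s} - \<eta>" by linarith
  hence "Phi Back (F - {j}) V' \<le> Phi Back F V - \<eta>" unfolding Phi_def f1_def f3_def by simp
  thus ?thesis using inv' eta_pos by force
qed

lemma step_exit:
  assumes inv: "Inv Back F \<beta> \<delta> V"
    and c: "F = {} \<or> (\<forall>i\<in>F. Q (\<beta> - axis i (\<beta> $ i)) - Q \<beta> \<ge> \<delta> (card F) / 2)"
  shows "Inv Test F \<beta> \<delta> V \<and> Phi Test F V \<le> Phi Back F V - \<eta> / 2"
  using assms unfolding Inv_def Phi_def by auto


lemma Inv_init: "Inv Test {} 0 (\<lambda>_. 0) (\<lambda>_. Q 0)"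
proof -
  have rm: "is_restr_min Q {} 0"
    unfolding is_restr_min_def
  proof (intro conjI allI impI)
    show "supp (0::real^'n) \<subseteq> {}" by (simp add: supp_def)
    fix \<beta>' :: "real^'n" assume "supp \<beta>' \<subseteq> {}"
    hence "\<beta>' = 0" by (simp add: supp_def vec_eq_iff)
    thus "Q 0 \<le> Q \<beta>'" by simp
  qed
  show ?thesis unfolding Inv_def using rm s_gt Qmin_le[of 0] by auto
qed

definition InvC :: "'n foba_conf \<Rightarrow> (nat \<Rightarrow> real) \<Rightarrow> bool" where
  "InvC c V = (case c of (ph, F, \<beta>, \<delta>) \<Rightarrow> Inv ph F \<beta> \<delta> V)"
definition PhiC :: "'n foba_conf \<Rightarrow> (nat \<Rightarrow> real) \<Rightarrow> real" where
  "PhiC c V = (case c of (ph, F, \<beta>, \<delta>) \<Rightarrow> Phi ph F V)"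

lemma stepC:
  assumes "InvC c V" "foba_gdt_step Q G \<epsilon> c c'"
  shows "\<exists>V'. InvC c' V' \<and> PhiC c' V' \<le> PhiC c V - \<eta> / 2"
  using assms(2,1)
proof (cases rule: foba_gdt_step.cases)
  case (forward \<beta> i F \<beta>' \<delta>)
  thus ?thesis using step_fwd[of F \<beta> \<delta> V i \<beta>'] assms(1) unfolding InvC_def PhiC_def by auto
next
  case (back_exit F \<beta> \<delta>)
  thus ?thesis using step_exit[of F \<beta> \<delta> V] assms(1) unfolding InvC_def PhiC_def by auto
next
  case (back_remove F j \<beta> \<delta> \<beta>')
  thus ?thesis using step_remove[of F \<beta> \<delta> V j \<beta>'] assms(1) unfolding InvC_def PhiC_def by auto
qed

lemma reach_inv:
  assumes "(foba_gdt_step Q G \<epsilon>)\<^sup>*\<^sup>* foba_init c"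
  shows "\<exists>V. InvC c V"
  using assms
proof (induction rule: rtranclp_induct)
  case base
  show ?case using Inv_init unfolding InvC_def foba_init_def by auto
next
  case (step b c)
  then obtain V where "InvC b V" by blast
  thus ?case using stepC[OF _ step.hyps(2)] by blast
qed

lemma progress:
  assumes "InvC c V"
  shows "foba_gdt_stopped G \<epsilon> c \<or> (\<exists>c'. foba_gdt_step Q G \<epsilon> c c')"
proof -
  obtain ph F \<beta> \<delta> where c: "c = (ph, F, \<beta>, \<delta>)" by (cases c) auto
  have inv: "Inv ph F \<beta> \<delta> V" using assms unfolding c InvC_def by simp
  hence rmin: "is_restr_min Q F \<beta>" unfolding Inv_def by simp
  show ?thesis
  proof (cases ph)
    case Test
    show ?thesis
    proof (cases "linf (G \<beta>) < \<epsilon>")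
      case True thus ?thesis using Test c by simp
    next
      case False
      have "F \<noteq> UNIV"
      proof
        assume "F = UNIV"
        hence "\<And>j. G \<beta> $ j = 0" using restr_min_grad[OF rmin] by simp
        hence "linf (G \<beta>) \<le> 0" by (intro linf_le) simp
        thus False using False eps_pos by simp
      qed
      define A where "A = UNIV - F"
      define f where "f i = \<bar>G \<beta> $ i\<bar>" for i
      have An: "A \<noteq> {}" "finite A" using \<open>F \<noteq> UNIV\<close> unfolding A_def by auto
      have "Max (f ` A) \<in> f ` A" using An by (intro Max_in) auto
      then obtain i where iA: "i \<in> A" and fi: "f i = Max (f ` A)" by auto
      have imax: "\<forall>i'. i' \<notin> F \<longrightarrow> \<bar>G \<beta> $ i'\<bar> \<le> \<bar>G \<beta> $ i\<bar>"
      proof (intro allI impI)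
        fix i' assume "i' \<notin> F"
        hence "f i' \<le> Max (f ` A)" using An unfolding A_def by (intro Max_ge) auto
        thus "\<bar>G \<beta> $ i'\<bar> \<le> \<bar>G \<beta> $ i\<bar>" using fi unfolding f_def by simp
      qed
      obtain \<beta>' where "is_restr_min Q (insert i F) \<beta>'" using hat_exists by blast
      hence "foba_gdt_step Q G \<epsilon> (Test, F, \<beta>, \<delta>)
           (Back, insert i F, \<beta>', \<delta>(card F + 1 := Q \<beta> - Q \<beta>'))"
        using False iA imax unfolding A_def by (intro foba_gdt_step.forward) auto
      thus ?thesis using c Test by blast
    qed
  next
    case Back
    show ?thesis
    proof (cases "F = {} \<or> (\<forall>i\<in>F. Q (\<beta> - axis i (\<beta> $ i)) - Q \<beta> \<ge> \<delta> (card F) / 2)")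
      case True
      hence "foba_gdt_step Q G \<epsilon> (Back, F, \<beta>, \<delta>) (Test, F, \<beta>, \<delta>)"
        by (rule foba_gdt_step.back_exit)
      thus ?thesis using c Back by blast
    next
      case False
      hence Fne: "F \<noteq> {}" by simp
      from False obtain i0 where i0: "i0 \<in> F" "Q (\<beta> - axis i0 (\<beta> $ i0)) - Q \<beta> < \<delta> (card F) / 2"
        by (auto simp: not_le)
      define f where "f i = Q (\<beta> - axis i (\<beta> $ i))" for i
      have "Min (f ` F) \<in> f ` F" using Fne by (intro Min_in) auto
      then obtain j where jF: "j \<in> F" and fj: "f j = Min (f ` F)" by auto
      have jmin: "\<forall>i\<in>F. Q (\<beta> - axis j (\<beta> $ j)) \<le> Q (\<beta> - axis i (\<beta> $ i))"
      proof
        fix i assume "i \<in> F"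
        hence "Min (f ` F) \<le> f i" by (intro Min_le) auto
        thus "Q (\<beta> - axis j (\<beta> $ j)) \<le> Q (\<beta> - axis i (\<beta> $ i))" using fj unfolding f_def by simp
      qed
      have cj: "Q (\<beta> - axis j (\<beta> $ j)) - Q \<beta> < \<delta> (card F) / 2" using jmin i0 by fastforce
      obtain \<beta>' where "is_restr_min Q (F - {j}) \<beta>'" using hat_exists by blast
      hence "foba_gdt_step Q G \<epsilon> (Back, F, \<beta>, \<delta>) (Back, F - {j}, \<beta>', \<delta>)"
        using Fne jF jmin cj by (intro foba_gdt_step.back_remove)
      thus ?thesis using c Back by blast
    qed
  qed
qed


lemma PhiC_nonneg: "InvC c V \<Longrightarrow> PhiC c V \<ge> 0"
  using Phi_nonneg unfolding InvC_def PhiC_def by (cases c) auto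

lemma InvC_card: "InvC c V \<Longrightarrow> card (conf_support c) + kbar \<le> s"
  unfolding InvC_def Inv_def by (cases c) auto

lemma no_infinite:
  "\<nexists>f. f 0 = foba_init \<and> (\<forall>n. foba_gdt_step Q G \<epsilon> (f n) (f (Suc n)))"
proof
  assume "\<exists>f. f 0 = foba_init \<and> (\<forall>n. foba_gdt_step Q G \<epsilon> (f n) (f (Suc n)))"
  then obtain f where f0: "f 0 = foba_init" and fs: "\<And>n. foba_gdt_step Q G \<epsilon> (f n) (f (Suc n))" by blast
  define V0 where "V0 = (\<lambda>_::nat. Q 0)"
  have I0: "InvC (f 0) V0" using Inv_init f0 unfolding InvC_def foba_init_def V0_def by simp
  have key: "\<exists>V. InvC (f n) V \<and> PhiC (f n) V \<le> PhiC (f 0) V0 - real n * \<eta> / 2" for n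
  proof (induction n)
    case 0 show ?case using I0 by auto
  next
    case (Suc n)
    then obtain V where V: "InvC (f n) V" "PhiC (f n) V \<le> PhiC (f 0) V0 - real n * \<eta> / 2" by blast
    from stepC[OF V(1) fs] obtain V' where V': "InvC (f (Suc n)) V'" "PhiC (f (Suc n)) V' \<le> PhiC (f n) V - \<eta> / 2"
      by blast
    have "PhiC (f (Suc n)) V' \<le> PhiC (f 0) V0 - real (Suc n) * \<eta> / 2"
    proof -
      have "real (Suc n) * \<eta> / 2 = real n * \<eta> / 2 + \<eta> / 2" by (simp add: algebra_simps add_divide_distrib)
      thus ?thesis using V(2) V'(2) by linarith
    qed
    thus ?case using V'(1) by blast
  qed
  obtain n where n: "PhiC (f 0) V0 * 2 / \<eta> < real n" using reals_Archimedean2 by blast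
  from key[of n] obtain V where V: "InvC (f n) V" "PhiC (f n) V \<le> PhiC (f 0) V0 - real n * \<eta> / 2" by blast
  have "PhiC (f 0) V0 * 2 < real n * \<eta>" using n eta_pos by (simp add: pos_divide_less_eq)
  hence "PhiC (f 0) V0 - real n * \<eta> / 2 < 0" by simp
  thus False using V PhiC_nonneg[OF V(1)] by linarith
qed

end

theorem theorem2:
  fixes Q :: "real^'n \<Rightarrow> real" and G :: "real^'n \<Rightarrow> real^'n"
    and \<rho>m \<rho>p :: "nat \<Rightarrow> real" and \<beta>bar :: "real^'n" and kbar s :: nat and \<epsilon> :: real
  assumes convex: "convex_on UNIV Q"
    and grad: "\<forall>\<beta>. (Q has_derivative (\<lambda>h. G \<beta> \<bullet> h)) (at \<beta>)"
    and grad_cont: "continuous_on UNIV G"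
    and hat_exists: "\<forall>F. \<exists>\<beta>. is_restr_min Q F \<beta>"
    and rsc_s: "rsc Q G \<rho>m \<rho>p s" and rsc_1: "rsc Q G \<rho>m \<rho>p 1"
    and betabar_opt: "\<forall>\<beta>. norm0 \<beta> \<le> kbar \<longrightarrow> Q \<beta>bar \<le> Q \<beta>"
    and kbar_def: "kbar = norm0 \<beta>bar"
    and s_pos: "s > 0"
    and s_cond: "real s - real kbar > (real kbar + 1) *
        ((sqrt (\<rho>p s / \<rho>m s) + 1) * (2 * \<rho>p 1 / \<rho>m s))\<^sup>2"
    and eps_cond: "\<epsilon> > 2 * sqrt 2 * \<rho>p 1 / \<rho>m s * linf (G \<beta>bar)"
  shows "(\<nexists>f. f 0 = foba_init \<and> (\<forall>n. foba_gdt_step Q G \<epsilon> (f n) (f (Suc n))))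
       \<and> (\<forall>c. (foba_gdt_step Q G \<epsilon>)\<^sup>*\<^sup>* foba_init c \<longrightarrow>
              foba_gdt_stopped G \<epsilon> c \<or> (\<exists>c'. foba_gdt_step Q G \<epsilon> c c'))
       \<and> (\<forall>c. (foba_gdt_step Q G \<epsilon>)\<^sup>*\<^sup>* foba_init c \<and> foba_gdt_stopped G \<epsilon> c \<longrightarrow>
              card (conf_support c) \<le> s - kbar)"
proof -
  interpret foba Q G \<rho>m \<rho>p \<beta>bar kbar s \<epsilon>
    using hat_exists rsc_s rsc_1 betabar_opt kbar_def s_cond eps_cond by unfold_locales
  show ?thesis
  proof (intro conjI allI impI)
    show "\<nexists>f. f 0 = foba_init \<and> (\<forall>n. foba_gdt_step Q G \<epsilon> (f n) (f (Suc n)))" by (rule no_infinite)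
  next
    fix c assume "(foba_gdt_step Q G \<epsilon>)\<^sup>*\<^sup>* foba_init c"
    then obtain V where "InvC c V" using reach_inv by blast
    thus "foba_gdt_stopped G \<epsilon> c \<or> (\<exists>c'. foba_gdt_step Q G \<epsilon> c c')" by (rule progress)
  next
    fix c assume "(foba_gdt_step Q G \<epsilon>)\<^sup>*\<^sup>* foba_init c \<and> foba_gdt_stopped G \<epsilon> c"
    then obtain V where "InvC c V" using reach_inv by blast
    from InvC_card[OF this] show "card (conf_support c) \<le> s - kbar" by simp
  qed
qed

end
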